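(* Let $W$ be a finite group acting on an affine variety $X$ and let $X/W=\operatorname{Spec}\mathcal{O}(X)^W$. Then $\mathcal{D}(X,X/W)=\mathcal{D}(X)^W$ and $\overline{\mathcal{D}}(X,X/W)=\overline{\mathcal{D}}(X)^W$.
   Context: Varieties are over $\mathbb{C}$ and irreducible. $\mathcal{D}(X)$ is the algebra of ($\mathbb{C}$-linear, Grothendieck) differential operators on $\mathcal{O}(X)$, filtered by order, with associated graded algebra $\overline{\mathcal{D}}(X)$; $W$ acts on both by conjugation. $\mathcal{D}(X,X/W)=\{D\in\mathcal{D}(X): D(\mathcal{O}(X)^W)\subseteq\mathcal{O}(X)^W\}$ with induced filtration $\mathcal{D}(X,X/W)\cap\mathcal{D}(X)_{\le d}$ and associated graded algebra $\overline{\mathcal{D}}(X,X/W)\subseteq\overline{\mathcal{D}}(X)$. *)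

theory Defs
  imports "HOL-Analysis.Analysis" "HOL-Algebra.Group"
begin

inductive_set polyfun :: "(complex^'n \<Rightarrow> complex) set" where
  pf_const: "(\<lambda>x. c) \<in> polyfun"
| pf_coord: "(\<lambda>x. x $ i) \<in> polyfun"
| pf_add: "p \<in> polyfun \<Longrightarrow> q \<in> polyfun \<Longrightarrow> (\<lambda>x. p x + q x) \<in> polyfun"
| pf_mult: "p \<in> polyfun \<Longrightarrow> q \<in> polyfun \<Longrightarrow> (\<lambda>x. p x * q x) \<in> polyfun"

definition zariski_closed :: "(complex^'n) set \<Rightarrow> bool" where
  "zariski_closed Z \<longleftrightarrow> (\<exists>S \<subseteq> polyfun. Z = {x. \<forall>p\<in>S. p x = 0})"

definition affine_variety :: "(complex^'n) set \<Rightarrow> bool" where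
  "affine_variety X \<longleftrightarrow> zariski_closed X \<and> X \<noteq> {} \<and>
     (\<forall>Z1 Z2. zariski_closed Z1 \<longrightarrow> zariski_closed Z2 \<longrightarrow> X = (Z1 \<inter> X) \<union> (Z2 \<inter> X)
        \<longrightarrow> X \<subseteq> Z1 \<or> X \<subseteq> Z2)"

text \<open>Regular functions O(X), represented as functions vanishing outside X.\<close>
definition regfun :: "(complex^'n) set \<Rightarrow> (complex^'n \<Rightarrow> complex) set" where
  "regfun X = {f. \<exists>p\<in>polyfun. \<forall>x. f x = (if x \<in> X then p x else 0)}"

definition morphism :: "(complex^'n) set \<Rightarrow> (complex^'n \<Rightarrow> complex^'n) \<Rightarrow> bool" where
  "morphism X \<phi> \<longleftrightarrow> (\<forall>x\<in>X. \<phi> x \<in> X) \<and>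
     (\<forall>i. \<exists>p\<in>polyfun. \<forall>x\<in>X. \<phi> x $ i = p x)"

definition group_action_on_variety ::
  "('g, 'b) monoid_scheme \<Rightarrow> (complex^'n) set \<Rightarrow> ('g \<Rightarrow> complex^'n \<Rightarrow> complex^'n) \<Rightarrow> bool" where
  "group_action_on_variety G X act \<longleftrightarrow> group G \<and>
     (\<forall>g\<in>carrier G. morphism X (act g)) \<and>
     (\<forall>x\<in>X. act \<one>\<^bsub>G\<^esub> x = x) \<and>
     (\<forall>g\<in>carrier G. \<forall>h\<in>carrier G. \<forall>x\<in>X. act (g \<otimes>\<^bsub>G\<^esub> h) x = act g (act h x))"

definition fun_act ::
  "('g, 'b) monoid_scheme \<Rightarrow> (complex^'n) set \<Rightarrow> ('g \<Rightarrow> complex^'n \<Rightarrow> complex^'n) \<Rightarrow> 'g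
     \<Rightarrow> (complex^'n \<Rightarrow> complex) \<Rightarrow> (complex^'n \<Rightarrow> complex)" where
  "fun_act G X act g f = (\<lambda>x. if x \<in> X then f (act (inv\<^bsub>G\<^esub> g) x) else 0)"

definition invariants ::
  "('g, 'b) monoid_scheme \<Rightarrow> (complex^'n) set \<Rightarrow> ('g \<Rightarrow> complex^'n \<Rightarrow> complex^'n)
     \<Rightarrow> (complex^'n \<Rightarrow> complex) set" where
  "invariants G X act = {f \<in> regfun X. \<forall>g\<in>carrier G. fun_act G X act g f = f}"

type_synonym 'n op = "(complex^'n \<Rightarrow> complex) \<Rightarrow> (complex^'n \<Rightarrow> complex)"

definition clinear_on :: "(complex^'n) set \<Rightarrow> 'n op \<Rightarrow> bool" where
  "clinear_on X D \<longleftrightarrow> (\<forall>f\<in>regfun X. D f \<in> regfun X) \<and>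
     (\<forall>f\<in>regfun X. \<forall>g\<in>regfun X. \<forall>c::complex.
        D (\<lambda>x. c * f x + g x) = (\<lambda>x. c * D f x + D g x))"

fun diffop :: "(complex^'n) set \<Rightarrow> nat \<Rightarrow> 'n op \<Rightarrow> bool" where
  "diffop X 0 D \<longleftrightarrow> clinear_on X D \<and>
     (\<forall>a\<in>regfun X. \<forall>f\<in>regfun X. D (\<lambda>x. a x * f x) = (\<lambda>x. a x * D f x))"
| "diffop X (Suc d) D \<longleftrightarrow> clinear_on X D \<and>
     (\<forall>a\<in>regfun X. diffop X d (\<lambda>f. (\<lambda>x. D (\<lambda>y. a y * f y) x - a x * D f x)))"

text \<open>Order at most d-1 (with D_{<=-1} = 0, as operators on O(X)).\<close>
definition diffop_below :: "(complex^'n) set \<Rightarrow> nat \<Rightarrow> 'n op \<Rightarrow> bool" where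
  "diffop_below X d D \<longleftrightarrow>
     (if d = 0 then clinear_on X D \<and> (\<forall>f\<in>regfun X. D f = (\<lambda>x. 0)) else diffop X (d - 1) D)"

definition diffops :: "(complex^'n) set \<Rightarrow> 'n op set" where
  "diffops X = {D. \<exists>d. diffop X d D}"

definition op_diff :: "'n op \<Rightarrow> 'n op \<Rightarrow> 'n op" where
  "op_diff D E = (\<lambda>f x. D f x - E f x)"

definition op_act ::
  "('g, 'b) monoid_scheme \<Rightarrow> (complex^'n) set \<Rightarrow> ('g \<Rightarrow> complex^'n \<Rightarrow> complex^'n) \<Rightarrow> 'g
     \<Rightarrow> 'n op \<Rightarrow> 'n op" where
  "op_act G X act g D = (\<lambda>f. fun_act G X act g (D (fun_act G X act (inv\<^bsub>G\<^esub> g) f)))"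

text \<open>D(X,X/W): operators preserving the invariant ring.\<close>
definition preserves_invariants ::
  "('g, 'b) monoid_scheme \<Rightarrow> (complex^'n) set \<Rightarrow> ('g \<Rightarrow> complex^'n \<Rightarrow> complex^'n) \<Rightarrow> 'n op \<Rightarrow> bool" where
  "preserves_invariants G X act D \<longleftrightarrow> (\<forall>f\<in>invariants G X act. D f \<in> invariants G X act)"

definition invariant_op ::
  "('g, 'b) monoid_scheme \<Rightarrow> (complex^'n) set \<Rightarrow> ('g \<Rightarrow> complex^'n \<Rightarrow> complex^'n) \<Rightarrow> 'n op \<Rightarrow> bool" where
  "invariant_op G X act D \<longleftrightarrow> (\<forall>g\<in>carrier G. \<forall>f\<in>regfun X. op_act G X act g D f = D f)"

end

theory Submission
  imports Defs
begin


definition mask :: "(complex^'n) set \<Rightarrow> (complex^'n \<Rightarrow> complex) \<Rightarrow> (complex^'n \<Rightarrow> complex)" where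
  "mask X p = (\<lambda>x. if x \<in> X then p x else 0)"

lemma regfun_iff: "f \<in> regfun X \<longleftrightarrow> (\<exists>p\<in>polyfun. f = mask X p)"
  unfolding regfun_def mask_def fun_eq_iff by auto

lemma mask_regfun: "p \<in> polyfun \<Longrightarrow> mask X p \<in> regfun X"
  using regfun_iff by blast

lemma regfun_out: "f \<in> regfun X \<Longrightarrow> x \<notin> X \<Longrightarrow> f x = 0"
  unfolding regfun_def by auto

lemma polyfun_const: "(\<lambda>x. c) \<in> polyfun" by (rule pf_const)

lemma polyfun_add: "p \<in> polyfun \<Longrightarrow> q \<in> polyfun \<Longrightarrow> (\<lambda>x. p x + q x) \<in> polyfun"
  by (rule pf_add)
lemma polyfun_mult: "p \<in> polyfun \<Longrightarrow> q \<in> polyfun \<Longrightarrow> (\<lambda>x. p x * q x) \<in> polyfun"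
  by (rule pf_mult)
lemma polyfun_scale: "p \<in> polyfun \<Longrightarrow> (\<lambda>x. c * p x) \<in> polyfun"
  using pf_mult[OF pf_const[of c] , of p] by simp
lemma polyfun_diff: "p \<in> polyfun \<Longrightarrow> q \<in> polyfun \<Longrightarrow> (\<lambda>x. p x - q x) \<in> polyfun"
  using pf_add[of p "\<lambda>x. (-1) * q x"] polyfun_scale[of q "-1"] by simp
lemma polyfun_power: "p \<in> polyfun \<Longrightarrow> (\<lambda>x. p x ^ k) \<in> polyfun"
proof (induction k)
  case 0 then show ?case using pf_const[of 1] by simp
next
  case (Suc k) then show ?case using pf_mult[of p "\<lambda>x. p x ^ k"] by simp
qed
lemma polyfun_prod: "finite I \<Longrightarrow> (\<forall>i\<in>I. p i \<in> polyfun) \<Longrightarrow> (\<lambda>x. \<Prod>i\<in>I. p i x) \<in> polyfun"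
proof (induction I rule: finite_induct)
  case empty then show ?case using pf_const[of 1] by simp
next
  case (insert a I) then show ?case using pf_mult[of "p a" "\<lambda>x. \<Prod>i\<in>I. p i x"] by simp
qed

lemma regfun_zero: "(\<lambda>x. 0) \<in> regfun X"
  using mask_regfun[OF pf_const[of 0], of X] by (simp add: mask_def)

lemma regfun_mult: "f \<in> regfun X \<Longrightarrow> g \<in> regfun X \<Longrightarrow> (\<lambda>x. f x * g x) \<in> regfun X"
proof -
  assume "f \<in> regfun X" "g \<in> regfun X"
  then obtain p q where "p \<in> polyfun" "q \<in> polyfun" "f = mask X p" "g = mask X q"
    by (auto simp: regfun_iff)
  then show ?thesis using mask_regfun[OF pf_mult[of p q], of X]
    by (simp add: mask_def if_distrib cong: if_cong)
qed

lemma regfun_lin: "f \<in> regfun X \<Longrightarrow> g \<in> regfun X \<Longrightarrow> (\<lambda>x. c * f x + g x) \<in> regfun X"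
proof -
  assume "f \<in> regfun X" "g \<in> regfun X"
  then obtain p q where "p \<in> polyfun" "q \<in> polyfun" "f = mask X p" "g = mask X q"
    by (auto simp: regfun_iff)
  then show ?thesis using mask_regfun[OF pf_add[OF polyfun_scale[of p c] \<open>q\<in>polyfun\<close>], of X]
    by (simp add: mask_def if_distrib cong: if_cong)
qed

lemma regfun_add: "f \<in> regfun X \<Longrightarrow> g \<in> regfun X \<Longrightarrow> (\<lambda>x. f x + g x) \<in> regfun X"
  using regfun_lin[of f X g 1] by simp
lemma regfun_scale: "f \<in> regfun X \<Longrightarrow> (\<lambda>x. c * f x) \<in> regfun X"
  using regfun_lin[OF _ regfun_zero, of f X c] by simp
lemma regfun_diff: "f \<in> regfun X \<Longrightarrow> g \<in> regfun X \<Longrightarrow> (\<lambda>x. f x - g x) \<in> regfun X"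
  using regfun_lin[of g X f "-1"] by simp
lemma regfun_sum: "finite I \<Longrightarrow> (\<forall>i\<in>I. u i \<in> regfun X) \<Longrightarrow> (\<lambda>x. \<Sum>i\<in>I. u i x) \<in> regfun X"
proof (induction I rule: finite_induct)
  case empty then show ?case using regfun_zero by simp
next
  case (insert a I) then show ?case using regfun_add[of "u a" X "\<lambda>x. \<Sum>i\<in>I. u i x"] by simp
qed
lemma regfun_power_mult: "a \<in> regfun X \<Longrightarrow> h \<in> regfun X \<Longrightarrow> (\<lambda>z. a z ^ k * h z) \<in> regfun X"
proof (induction k)
  case 0 then show ?case by simp
next
  case (Suc k) then show ?case using regfun_mult[of a X "\<lambda>z. a z ^ k * h z"] by (simp add: mult.assoc)
qed

lemma diffop_clinear: "diffop X d D \<Longrightarrow> clinear_on X D"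
  by (cases d) auto

lemma cl_regfun: "clinear_on X D \<Longrightarrow> f \<in> regfun X \<Longrightarrow> D f \<in> regfun X"
  unfolding clinear_on_def by blast

lemma cl_lin: "clinear_on X D \<Longrightarrow> f \<in> regfun X \<Longrightarrow> g \<in> regfun X \<Longrightarrow>
   D (\<lambda>x. c * f x + g x) = (\<lambda>x. c * D f x + D g x)"
  unfolding clinear_on_def by blast

lemma cl_zero: "clinear_on X D \<Longrightarrow> D (\<lambda>x. 0) = (\<lambda>x. 0)"
proof -
  assume a: "clinear_on X D"
  have "D (\<lambda>x. 1 * 0 + 0) = (\<lambda>x. 1 * D (\<lambda>x. 0) x + D (\<lambda>x. 0) x)"
    using cl_lin[OF a regfun_zero regfun_zero, of 1] by simp
  then have "D (\<lambda>x. 0) = (\<lambda>x. D (\<lambda>x. 0) x + D (\<lambda>x. 0) x)" by simp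
  then show ?thesis by (metis add_cancel_right_right)
qed

lemma cl_add: "clinear_on X D \<Longrightarrow> f \<in> regfun X \<Longrightarrow> g \<in> regfun X \<Longrightarrow>
   D (\<lambda>x. f x + g x) = (\<lambda>x. D f x + D g x)"
  using cl_lin[of X D f g 1] by simp

lemma cl_scale: "clinear_on X D \<Longrightarrow> f \<in> regfun X \<Longrightarrow>
   D (\<lambda>x. c * f x) = (\<lambda>x. c * D f x)"
  using cl_lin[OF _ _ regfun_zero, of X D f c] cl_zero[of X D] by simp

lemma cl_diff: "clinear_on X D \<Longrightarrow> f \<in> regfun X \<Longrightarrow> g \<in> regfun X \<Longrightarrow>
   D (\<lambda>x. f x - g x) = (\<lambda>x. D f x - D g x)"
  using cl_lin[of X D g f "-1"] by simp

lemma cl_sum: assumes "clinear_on X D" "finite I" "\<forall>i\<in>I. u i \<in> regfun X" shows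
   "D (\<lambda>x. \<Sum>i\<in>I. u i x) = (\<lambda>x. \<Sum>i\<in>I. D (u i) x)"
  using assms(2,3) proof (induction I rule: finite_induct)
  case empty then show ?case using cl_zero assms(1) by simp
next
  case (insert a I)
  have r: "(\<lambda>x. \<Sum>i\<in>I. u i x) \<in> regfun X" using insert regfun_sum[of I u X] by simp
  have "D (\<lambda>x. \<Sum>i\<in>insert a I. u i x) = D (\<lambda>x. u a x + (\<Sum>i\<in>I. u i x))"
    using insert.hyps by simp
  also have "\<dots> = (\<lambda>x. D (u a) x + D (\<lambda>x. \<Sum>i\<in>I. u i x) x)"
    by (rule cl_add[OF assms(1)]) (use insert.prems r in auto)
  also have "\<dots> = (\<lambda>x. \<Sum>i\<in>insert a I. D (u i) x)"
  proof -
    have ih: "D (\<lambda>x. \<Sum>i\<in>I. u i x) = (\<lambda>x. \<Sum>i\<in>I. D (u i) x)"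
      using insert.IH insert.prems by blast
    show ?thesis unfolding ih by (rule ext, subst sum.insert[OF insert.hyps], rule refl)
  qed
  finally show ?case .
qed

lemma diffop_cong: "(\<forall>f\<in>regfun X. D f = D' f) \<Longrightarrow> diffop X d D = diffop X d D'"
proof (induction d arbitrary: D D')
  case 0
  have c: "clinear_on X D = clinear_on X D'"
    using 0 unfolding clinear_on_def by (simp add: regfun_lin)
  show ?case using 0 by (simp add: c regfun_mult)
next
  case (Suc d)
  have c: "clinear_on X D = clinear_on X D'"
    using Suc.prems unfolding clinear_on_def by (simp add: regfun_lin)
  have "\<And>a. a \<in> regfun X \<Longrightarrow> diffop X d (\<lambda>f x. D (\<lambda>y. a y * f y) x - a x * D f x) =
      diffop X d (\<lambda>f x. D' (\<lambda>y. a y * f y) x - a x * D' f x)"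
    by (rule Suc.IH) (simp add: Suc.prems regfun_mult)
  then show ?case using c by simp
qed

lemma cl_lincomb:
  assumes "finite I" "\<forall>i\<in>I. clinear_on X (Dg i)"
  shows "clinear_on X (\<lambda>f x. \<Sum>i\<in>I. c i * Dg i f x)"
  unfolding clinear_on_def
proof (intro conjI ballI allI)
  fix f assume f: "f \<in> regfun X"
  have "\<forall>i\<in>I. (\<lambda>x. c i * Dg i f x) \<in> regfun X"
    using assms(2) f by (blast intro: regfun_scale cl_regfun)
  then show "(\<lambda>x. \<Sum>i\<in>I. c i * Dg i f x) \<in> regfun X" by (rule regfun_sum[OF assms(1)])
next
  fix f g cc assume f: "f \<in> regfun X" and g: "g \<in> regfun X"
  have each: "\<And>i. i \<in> I \<Longrightarrow> Dg i (\<lambda>x. cc * f x + g x) = (\<lambda>x. cc * Dg i f x + Dg i g x)"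
    using assms(2) f g by (blast intro: cl_lin)
  show "(\<lambda>x. \<Sum>i\<in>I. c i * Dg i (\<lambda>x. cc * f x + g x) x) =
      (\<lambda>x. cc * (\<Sum>i\<in>I. c i * Dg i f x) + (\<Sum>i\<in>I. c i * Dg i g x))"
  proof
    fix x
    have "(\<Sum>i\<in>I. c i * Dg i (\<lambda>x. cc * f x + g x) x) = (\<Sum>i\<in>I. cc * (c i * Dg i f x) + c i * Dg i g x)"
      by (rule sum.cong) (simp_all add: each distrib_left mult.left_commute)
    also have "\<dots> = cc * (\<Sum>i\<in>I. c i * Dg i f x) + (\<Sum>i\<in>I. c i * Dg i g x)"
      by (simp only: sum.distrib sum_distrib_left)
    finally show "(\<Sum>i\<in>I. c i * Dg i (\<lambda>x. cc * f x + g x) x) = cc * (\<Sum>i\<in>I. c i * Dg i f x) + (\<Sum>i\<in>I. c i * Dg i g x)" .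
  qed
qed

lemma diffop_lincomb:
  assumes "finite I" "\<forall>i\<in>I. diffop X d (Dg i)"
  shows "diffop X d (\<lambda>f x. \<Sum>i\<in>I. c i * Dg i f x)"
  using assms(2)
proof (induction d arbitrary: Dg)
  case 0
  have cl: "clinear_on X (\<lambda>f x. \<Sum>i\<in>I. c i * Dg i f x)"
    by (rule cl_lincomb[OF assms(1)]) (use 0 diffop_clinear in blast)
  have "\<forall>a\<in>regfun X. \<forall>f\<in>regfun X. (\<lambda>x. \<Sum>i\<in>I. c i * Dg i (\<lambda>x. a x * f x) x) = (\<lambda>x. a x * (\<Sum>i\<in>I. c i * Dg i f x))"
  proof (intro ballI)
    fix a f assume "a \<in> regfun X" "f \<in> regfun X"
    then have each: "\<And>i. i \<in> I \<Longrightarrow> Dg i (\<lambda>x. a x * f x) = (\<lambda>x. a x * Dg i f x)" using 0 by auto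
    show "(\<lambda>x. \<Sum>i\<in>I. c i * Dg i (\<lambda>x. a x * f x) x) = (\<lambda>x. a x * (\<Sum>i\<in>I. c i * Dg i f x))"
    proof
      fix x
      have "(\<Sum>i\<in>I. c i * Dg i (\<lambda>x. a x * f x) x) = (\<Sum>i\<in>I. a x * (c i * Dg i f x))"
        by (rule sum.cong) (simp_all add: each mult.left_commute)
      also have "\<dots> = a x * (\<Sum>i\<in>I. c i * Dg i f x)" by (simp only: sum_distrib_left)
      finally show "(\<Sum>i\<in>I. c i * Dg i (\<lambda>x. a x * f x) x) = a x * (\<Sum>i\<in>I. c i * Dg i f x)" .
    qed
  qed
  then show ?case using cl by simp
next
  case (Suc d)
  have cl: "clinear_on X (\<lambda>f x. \<Sum>i\<in>I. c i * Dg i f x)"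
    by (rule cl_lincomb[OF assms(1)]) (use Suc.prems diffop_clinear in blast)
  have "\<forall>a\<in>regfun X. diffop X d (\<lambda>f x. (\<Sum>i\<in>I. c i * Dg i (\<lambda>y. a y * f y) x) - a x * (\<Sum>i\<in>I. c i * Dg i f x))"
  proof
    fix a assume a: "a \<in> regfun X"
    have eq: "(\<lambda>f x. (\<Sum>i\<in>I. c i * Dg i (\<lambda>y. a y * f y) x) - a x * (\<Sum>i\<in>I. c i * Dg i f x))
      = (\<lambda>f x. \<Sum>i\<in>I. c i * (\<lambda>f x. Dg i (\<lambda>y. a y * f y) x - a x * Dg i f x) f x)"
    proof (intro ext)
      fix f x
      have "a x * (\<Sum>i\<in>I. c i * Dg i f x) = (\<Sum>i\<in>I. c i * (a x * Dg i f x))"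
        by (simp only: sum_distrib_left mult.left_commute)
      then show "(\<Sum>i\<in>I. c i * Dg i (\<lambda>y. a y * f y) x) - a x * (\<Sum>i\<in>I. c i * Dg i f x)
         = (\<Sum>i\<in>I. c i * (\<lambda>f x. Dg i (\<lambda>y. a y * f y) x - a x * Dg i f x) f x)"
        by (simp only: sum_subtractf[symmetric] right_diff_distrib)
    qed
    show "diffop X d (\<lambda>f x. (\<Sum>i\<in>I. c i * Dg i (\<lambda>y. a y * f y) x) - a x * (\<Sum>i\<in>I. c i * Dg i f x))"
      unfolding eq by (rule Suc.IH) (use Suc.prems a in auto)
  qed
  then show ?case using cl by simp
qed

lemma diffop_op_diff: "diffop X d D \<Longrightarrow> diffop X d E \<Longrightarrow> diffop X d (op_diff D E)"
proof -
  assume a: "diffop X d D" "diffop X d E"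
  have "diffop X d (\<lambda>f x. \<Sum>i\<in>{0::nat,1}. (if i = 0 then 1 else -1) * (if i = 0 then D else E) f x)"
    by (rule diffop_lincomb) (use a in auto)
  moreover have "(\<lambda>f x. \<Sum>i\<in>{0::nat,1}. (if i = 0 then 1 else -1) * (if i = 0 then D else E) f x) = op_diff D E"
    by (auto simp: op_diff_def)
  ultimately show ?thesis by simp
qed



locale gact =
  fixes G :: "('g, 'b) monoid_scheme" and X :: "(complex^'n) set"
    and act :: "'g \<Rightarrow> complex^'n \<Rightarrow> complex^'n"
  assumes GA: "group_action_on_variety G X act"
begin

lemma grp: "group G" using GA unfolding group_action_on_variety_def by blast

lemma morph: "g \<in> carrier G \<Longrightarrow> morphism X (act g)"
  using GA unfolding group_action_on_variety_def by blast

lemma act_in: "g \<in> carrier G \<Longrightarrow> x \<in> X \<Longrightarrow> act g x \<in> X"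
  using morph unfolding morphism_def by blast

lemma act_one: "x \<in> X \<Longrightarrow> act \<one>\<^bsub>G\<^esub> x = x"
  using GA unfolding group_action_on_variety_def by blast

lemma act_mult: "g \<in> carrier G \<Longrightarrow> h \<in> carrier G \<Longrightarrow> x \<in> X \<Longrightarrow> act (g \<otimes>\<^bsub>G\<^esub> h) x = act g (act h x)"
  using GA unfolding group_action_on_variety_def by blast

lemma comp_poly:
  assumes g: "g \<in> carrier G" and p: "p \<in> polyfun"
  shows "\<exists>q\<in>polyfun. \<forall>x\<in>X. p (act g x) = q x"
  using p
proof (induction rule: polyfun.induct)
  case (pf_const c) show ?case by (rule bexI[of _ "\<lambda>x. c"]) (simp_all add: polyfun.pf_const)
next
  case (pf_coord i) then show ?case using morph[OF g] unfolding morphism_def by metis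
next
  case (pf_add p q)
  then obtain p' q' where "p' \<in> polyfun" "q' \<in> polyfun" "\<forall>x\<in>X. p (act g x) = p' x" "\<forall>x\<in>X. q (act g x) = q' x"
    by blast
  then show ?case using polyfun.pf_add[of p' q'] by auto
next
  case (pf_mult p q)
  then obtain p' q' where "p' \<in> polyfun" "q' \<in> polyfun" "\<forall>x\<in>X. p (act g x) = p' x" "\<forall>x\<in>X. q (act g x) = q' x"
    by blast
  then show ?case using polyfun.pf_mult[of p' q'] by auto
qed

abbreviation fa where "fa \<equiv> fun_act G X act"
abbreviation oa where "oa \<equiv> op_act G X act"

lemma fa_regfun: assumes g: "g \<in> carrier G" and u: "u \<in> regfun X" shows "fa g u \<in> regfun X"
proof -
  obtain p where p: "p \<in> polyfun" "u = mask X p" using u by (auto simp: regfun_iff)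
  have ig: "inv\<^bsub>G\<^esub> g \<in> carrier G" using g grp by (simp add: group.inv_closed)
  obtain q where q: "q \<in> polyfun" "\<forall>x\<in>X. p (act (inv\<^bsub>G\<^esub> g) x) = q x"
    using comp_poly[OF ig p(1)] by blast
  have "fa g u = mask X q"
    using q act_in[OF ig] by (auto simp: fun_act_def p(2) mask_def)
  then show ?thesis using mask_regfun[OF q(1)] by simp
qed

lemma fa_mult: "fa g (\<lambda>z. u z * v z) = (\<lambda>z. fa g u z * fa g v z)"
  by (auto simp: fun_act_def)
lemma fa_lin: "fa g (\<lambda>z. c * u z + v z) = (\<lambda>z. c * fa g u z + fa g v z)"
  by (auto simp: fun_act_def)
lemma fa_diff: "fa g (\<lambda>z. u z - v z) = (\<lambda>z. fa g u z - fa g v z)"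
  by (auto simp: fun_act_def)
lemma fa_zero: "fa g (\<lambda>z. 0) = (\<lambda>z. 0)"
  by (auto simp: fun_act_def)
lemma fa_scale_sum: "fa g (\<lambda>z. c * (\<Sum>i\<in>I. u i z)) = (\<lambda>z. c * (\<Sum>i\<in>I. fa g (u i) z))"
  by (auto simp: fun_act_def)
lemma fa_sum: "fa g (\<lambda>z. \<Sum>i\<in>I. u i z) = (\<lambda>z. \<Sum>i\<in>I. fa g (u i) z)"
  by (auto simp: fun_act_def)

lemma fa_comp: assumes g: "g \<in> carrier G" and h: "h \<in> carrier G"
  shows "fa g (fa h u) = fa (g \<otimes>\<^bsub>G\<^esub> h) u"
proof
  fix z
  have ig: "inv\<^bsub>G\<^esub> g \<in> carrier G" and ih: "inv\<^bsub>G\<^esub> h \<in> carrier G"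
    using g h grp by (auto simp: group.inv_closed)
  have inv: "inv\<^bsub>G\<^esub> (g \<otimes>\<^bsub>G\<^esub> h) = inv\<^bsub>G\<^esub> h \<otimes>\<^bsub>G\<^esub> inv\<^bsub>G\<^esub> g"
    using g h grp by (simp add: group.inv_mult_group)
  show "fa g (fa h u) z = fa (g \<otimes>\<^bsub>G\<^esub> h) u z"
    using act_in[OF ig] act_mult[OF ih ig] by (auto simp: fun_act_def inv)
qed

lemma fa_one: "u \<in> regfun X \<Longrightarrow> fa \<one>\<^bsub>G\<^esub> u = u"
proof -
  assume u: "u \<in> regfun X"
  have i1: "inv\<^bsub>G\<^esub> \<one>\<^bsub>G\<^esub> = \<one>\<^bsub>G\<^esub>" using monoid.inv_one[OF group.is_monoid[OF grp]] .
  show ?thesis unfolding fun_act_def i1 using act_one regfun_out[OF u] by auto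
qed

lemma fa_triv: "u \<in> regfun X \<Longrightarrow> \<forall>z\<in>X. act (inv\<^bsub>G\<^esub> g) z = z \<Longrightarrow> fa g u = u"
  by (auto simp: fun_act_def regfun_out)

lemma fa_cancel: "g \<in> carrier G \<Longrightarrow> u \<in> regfun X \<Longrightarrow> fa g (fa (inv\<^bsub>G\<^esub> g) u) = u"
  using grp by (simp add: fa_comp group.inv_closed group.r_inv fa_one)

lemma fa_cancel': "g \<in> carrier G \<Longrightarrow> u \<in> regfun X \<Longrightarrow> fa (inv\<^bsub>G\<^esub> g) (fa g u) = u"
  using grp by (simp add: fa_comp group.inv_closed group.l_inv fa_one)

lemma inv_fix: "f \<in> invariants G X act \<Longrightarrow> g \<in> carrier G \<Longrightarrow> fa g f = f"
  unfolding invariants_def by blast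

lemma inv_regfun: "f \<in> invariants G X act \<Longrightarrow> f \<in> regfun X"
  unfolding invariants_def by blast

lemma sum_reindex: assumes h: "h \<in> carrier G"
  shows "(\<Sum>g\<in>carrier G. F (h \<otimes>\<^bsub>G\<^esub> g)) = (\<Sum>g\<in>carrier G. F g)"
proof (rule sum.reindex_bij_witness[where i = "\<lambda>g. inv\<^bsub>G\<^esub> h \<otimes>\<^bsub>G\<^esub> g" and j = "\<lambda>g. h \<otimes>\<^bsub>G\<^esub> g"])
  fix a assume a: "a \<in> carrier G"
  show "inv\<^bsub>G\<^esub> h \<otimes>\<^bsub>G\<^esub> (h \<otimes>\<^bsub>G\<^esub> a) = a" using grp h a
    by (metis group.inv_closed group.l_inv monoid.l_one group.is_monoid monoid.m_assoc)
  show "h \<otimes>\<^bsub>G\<^esub> a \<in> carrier G" using grp h a by (simp add: group.is_monoid monoid.m_closed)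
  show "F (h \<otimes>\<^bsub>G\<^esub> a) = F (h \<otimes>\<^bsub>G\<^esub> a)" by simp
next
  fix b assume b: "b \<in> carrier G"
  show "h \<otimes>\<^bsub>G\<^esub> (inv\<^bsub>G\<^esub> h \<otimes>\<^bsub>G\<^esub> b) = b" using grp h b
    by (metis group.inv_closed group.r_inv monoid.l_one group.is_monoid monoid.m_assoc)
  show "inv\<^bsub>G\<^esub> h \<otimes>\<^bsub>G\<^esub> b \<in> carrier G" using grp h b
    by (simp add: group.is_monoid monoid.m_closed group.inv_closed)
qed

lemma oa_regfun: "clinear_on X D \<Longrightarrow> g \<in> carrier G \<Longrightarrow> f \<in> regfun X \<Longrightarrow> oa g D f \<in> regfun X"
  unfolding op_act_def
  by (rule fa_regfun, assumption, rule cl_regfun, assumption, rule fa_regfun)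
     (simp_all add: group.inv_closed[OF grp])

lemma oa_clinear: assumes cl: "clinear_on X D" and g: "g \<in> carrier G" shows "clinear_on X (oa g D)"
  unfolding clinear_on_def
proof (intro conjI ballI allI)
  have ig: "inv\<^bsub>G\<^esub> g \<in> carrier G" using g grp by (simp add: group.inv_closed)
  fix f assume "f \<in> regfun X" then show "oa g D f \<in> regfun X" using oa_regfun cl g by blast
next
  have ig: "inv\<^bsub>G\<^esub> g \<in> carrier G" using g grp by (simp add: group.inv_closed)
  fix f h c assume f: "f \<in> regfun X" and h: "h \<in> regfun X"
  show "oa g D (\<lambda>x. c * f x + h x) = (\<lambda>x. c * oa g D f x + oa g D h x)"
    unfolding op_act_def fa_lin
    using cl_lin[OF cl fa_regfun[OF ig f] fa_regfun[OF ig h]] by (simp add: fa_lin)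
qed

lemma diffop_conj: "g \<in> carrier G \<Longrightarrow> diffop X d D \<Longrightarrow> diffop X d (oa g D)"
proof (induction d arbitrary: D)
  case 0
  have g: "g \<in> carrier G" by fact
  have ig: "inv\<^bsub>G\<^esub> g \<in> carrier G" using g grp by (simp add: group.inv_closed)
  have "\<forall>a\<in>regfun X. \<forall>f\<in>regfun X. oa g D (\<lambda>x. a x * f x) = (\<lambda>x. a x * oa g D f x)"
  proof (intro ballI)
    fix a f assume a: "a \<in> regfun X" and f: "f \<in> regfun X"
    have "oa g D (\<lambda>x. a x * f x) = fa g (D (\<lambda>x. fa (inv\<^bsub>G\<^esub> g) a x * fa (inv\<^bsub>G\<^esub> g) f x))"
      unfolding op_act_def fa_mult by simp
    also have "\<dots> = fa g (\<lambda>x. fa (inv\<^bsub>G\<^esub> g) a x * D (fa (inv\<^bsub>G\<^esub> g) f) x)"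
    proof -
      have m: "\<forall>a\<in>regfun X. \<forall>f\<in>regfun X. D (\<lambda>x. a x * f x) = (\<lambda>x. a x * D f x)"
        using 0(2) unfolding diffop.simps by blast
      have e: "D (\<lambda>x. fa (inv\<^bsub>G\<^esub> g) a x * fa (inv\<^bsub>G\<^esub> g) f x) = (\<lambda>x. fa (inv\<^bsub>G\<^esub> g) a x * D (fa (inv\<^bsub>G\<^esub> g) f) x)"
        by (rule m[rule_format, OF fa_regfun[OF ig a] fa_regfun[OF ig f]])
      show ?thesis unfolding e ..
    qed
    also have "\<dots> = (\<lambda>x. a x * oa g D f x)"
      unfolding fa_mult op_act_def fa_cancel[OF g a] by simp
    finally show "oa g D (\<lambda>x. a x * f x) = (\<lambda>x. a x * oa g D f x)" .
  qed
  then show ?case using oa_clinear[OF diffop_clinear[OF 0(2)] g] unfolding diffop.simps by blast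
next
  case (Suc d)
  have g: "g \<in> carrier G" by fact
  have ig: "inv\<^bsub>G\<^esub> g \<in> carrier G" using g grp by (simp add: group.inv_closed)
  have "\<forall>a\<in>regfun X. diffop X d (\<lambda>f x. oa g D (\<lambda>y. a y * f y) x - a x * oa g D f x)"
  proof
    fix a assume a: "a \<in> regfun X"
    define a' where "a' = fa (inv\<^bsub>G\<^esub> g) a"
    have a': "a' \<in> regfun X" unfolding a'_def using fa_regfun[OF ig a] .
    have "diffop X d (\<lambda>f x. D (\<lambda>y. a' y * f y) x - a' x * D f x)" using Suc.prems a' unfolding diffop.simps by blast
    then have d1: "diffop X d (oa g (\<lambda>f x. D (\<lambda>y. a' y * f y) x - a' x * D f x))"
      using Suc.IH[OF g] by blast
    have agree: "\<forall>f\<in>regfun X. oa g (\<lambda>f x. D (\<lambda>y. a' y * f y) x - a' x * D f x) f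
        = (\<lambda>x. oa g D (\<lambda>y. a y * f y) x - a x * oa g D f x)"
    proof
      fix f assume f: "f \<in> regfun X"
      show "oa g (\<lambda>f x. D (\<lambda>y. a' y * f y) x - a' x * D f x) f
        = (\<lambda>x. oa g D (\<lambda>y. a y * f y) x - a x * oa g D f x)"
        unfolding op_act_def fa_diff fa_mult a'_def fa_cancel[OF g a] by simp
    qed
    from iffD1[OF diffop_cong[OF agree] d1]
    show "diffop X d (\<lambda>f x. oa g D (\<lambda>y. a y * f y) x - a x * oa g D f x)" .
  qed
  then show ?case using oa_clinear[OF diffop_clinear[OF Suc.prems(2)] g] unfolding diffop.simps by blast
qed

lemma oa_comp: assumes g: "g \<in> carrier G" and h: "h \<in> carrier G"
  shows "oa h (oa g D) f = oa (h \<otimes>\<^bsub>G\<^esub> g) D f"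
proof -
  have ig: "inv\<^bsub>G\<^esub> g \<in> carrier G" and ih: "inv\<^bsub>G\<^esub> h \<in> carrier G"
    using g h grp by (auto simp: group.inv_closed)
  have inv: "inv\<^bsub>G\<^esub> (h \<otimes>\<^bsub>G\<^esub> g) = inv\<^bsub>G\<^esub> g \<otimes>\<^bsub>G\<^esub> inv\<^bsub>G\<^esub> h"
    using g h grp by (simp add: group.inv_mult_group)
  show ?thesis unfolding op_act_def fa_comp[OF h g] fa_comp[OF ig ih] inv ..
qed

lemma invop_preserves: "clinear_on X D \<Longrightarrow> invariant_op G X act D \<Longrightarrow> preserves_invariants G X act D"
  unfolding preserves_invariants_def invariant_op_def
proof (intro ballI)
  fix f assume cl: "clinear_on X D" and io: "\<forall>g\<in>carrier G. \<forall>f\<in>regfun X. oa g D f = D f"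
    and f: "f \<in> invariants G X act"
  have "\<forall>g\<in>carrier G. fa g (D f) = D f"
  proof
    fix g assume g: "g \<in> carrier G"
    have ig: "inv\<^bsub>G\<^esub> g \<in> carrier G" using g grp by (simp add: group.inv_closed)
    have "oa g D f = fa g (D f)" unfolding op_act_def using inv_fix[OF f ig] by simp
    then show "fa g (D f) = D f" using io g inv_regfun[OF f] by simp
  qed
  then show "D f \<in> invariants G X act" unfolding invariants_def
    using cl_regfun[OF cl inv_regfun[OF f]] by blast
qed

end



lemma mpow_zero:
  "diffop X d P \<Longrightarrow> a \<in> regfun X \<Longrightarrow> a x = 0 \<Longrightarrow> h \<in> regfun X \<Longrightarrow> P (\<lambda>z. a z ^ Suc d * h z) x = 0"
proof (induction d arbitrary: P h)
  case 0
  have m: "\<forall>a\<in>regfun X. \<forall>f\<in>regfun X. P (\<lambda>x. a x * f x) = (\<lambda>x. a x * P f x)"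
    using 0(1) unfolding diffop.simps by blast
  have e1: "(\<lambda>z. a z ^ Suc 0 * h z) = (\<lambda>z. a z * h z)" by simp
  have e2: "P (\<lambda>z. a z * h z) = (\<lambda>z. a z * P h z)" by (rule m[rule_format, OF 0(2) 0(4)])
  show ?case unfolding e1 e2 using 0(3) by simp
next
  case (Suc d)
  define h' where "h' = (\<lambda>z. a z ^ Suc d * h z)"
  have h': "h' \<in> regfun X" unfolding h'_def by (rule regfun_power_mult[OF Suc.prems(2) Suc.prems(4)])
  have e1: "(\<lambda>z. a z ^ Suc (Suc d) * h z) = (\<lambda>z. a z * h' z)" unfolding h'_def by (simp add: mult.assoc)
  have dq: "diffop X d (\<lambda>f x. P (\<lambda>y. a y * f y) x - a x * P f x)"
    using Suc.prems(1) Suc.prems(2) unfolding diffop.simps by blast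
  have "(\<lambda>f x. P (\<lambda>y. a y * f y) x - a x * P f x) h' x = 0"
    unfolding h'_def by (rule Suc.IH[OF dq Suc.prems(2) Suc.prems(3) Suc.prems(4)])
  then have "P (\<lambda>y. a y * h' y) x - a x * P h' x = 0" by simp
  then show ?case unfolding e1 using Suc.prems(3) by simp
qed

lemma zc_empty: "zariski_closed ({}::(complex^'n) set)"
  unfolding zariski_closed_def
  by (rule exI[of _ "{\<lambda>x. 1}"]) (auto intro: pf_const)

lemma zc_zero: "p \<in> polyfun \<Longrightarrow> zariski_closed {x. p x = 0}"
  unfolding zariski_closed_def by (rule exI[of _ "{p}"]) auto

lemma zc_Un: assumes A: "zariski_closed A" and B: "zariski_closed B" shows "zariski_closed (A \<union> B)"
proof -
  obtain S where S: "S \<subseteq> polyfun" "A = {x. \<forall>p\<in>S. p x = 0}" using A unfolding zariski_closed_def by blast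
  obtain T where T: "T \<subseteq> polyfun" "B = {x. \<forall>p\<in>T. p x = 0}" using B unfolding zariski_closed_def by blast
  define ST where "ST = {r. \<exists>s\<in>S. \<exists>t\<in>T. r = (\<lambda>z. s z * t z)}"
  have "ST \<subseteq> polyfun" unfolding ST_def using S(1) T(1) pf_mult by blast
  moreover have "A \<union> B = {x. \<forall>p\<in>ST. p x = 0}"
  proof (intro equalityI subsetI)
    fix x assume "x \<in> A \<union> B" then show "x \<in> {x. \<forall>p\<in>ST. p x = 0}"
      unfolding ST_def S(2) T(2) by auto
  next
    fix x assume x: "x \<in> {x. \<forall>p\<in>ST. p x = 0}"
    show "x \<in> A \<union> B"
    proof (cases "x \<in> A")
      case False
      then obtain s where s: "s \<in> S" "s x \<noteq> 0" unfolding S(2) by auto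
      have "\<forall>t\<in>T. t x = 0"
      proof
        fix t assume "t \<in> T"
        then have "(\<lambda>z. s z * t z) \<in> ST" unfolding ST_def using s by blast
        then have "s x * t x = 0" using x by auto
        then show "t x = 0" using s by simp
      qed
      then show ?thesis unfolding T(2) by auto
    qed simp
  qed
  ultimately show ?thesis unfolding zariski_closed_def by blast
qed

lemma zc_Union: "finite N \<Longrightarrow> \<forall>g\<in>N. zariski_closed (Z g) \<Longrightarrow> zariski_closed (\<Union>g\<in>N. Z g)"
proof (induction N rule: finite_induct)
  case empty then show ?case using zc_empty by simp
next
  case (insert a N) then show ?case using zc_Un[of "Z a" "\<Union>g\<in>N. Z g"] by simp
qed

lemma irr_two: "affine_variety X \<Longrightarrow> zariski_closed Z1 \<Longrightarrow> zariski_closed Z2 \<Longrightarrow> X \<subseteq> Z1 \<union> Z2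
   \<Longrightarrow> X \<subseteq> Z1 \<or> X \<subseteq> Z2"
proof -
  assume av: "affine_variety X" and z: "zariski_closed Z1" "zariski_closed Z2" and c: "X \<subseteq> Z1 \<union> Z2"
  have "X = (Z1 \<inter> X) \<union> (Z2 \<inter> X)" using c by blast
  then show ?thesis using av z unfolding affine_variety_def by blast
qed

lemma irr_union: assumes "affine_variety X" "finite N" "\<forall>g\<in>N. zariski_closed (Z g)" "X \<subseteq> (\<Union>g\<in>N. Z g)"
  shows "\<exists>g\<in>N. X \<subseteq> Z g"
  using assms(2,3,4)
proof (induction N rule: finite_induct)
  case empty then show ?case using assms(1) unfolding affine_variety_def by simp
next
  case (insert a N)
  have "X \<subseteq> Z a \<union> (\<Union>g\<in>N. Z g)" using insert.prems by simp
  then have "X \<subseteq> Z a \<or> X \<subseteq> (\<Union>g\<in>N. Z g)"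
    using irr_two[OF assms(1), of "Z a" "\<Union>g\<in>N. Z g"] zc_Union[OF insert.hyps(1), of Z] insert.prems(1)
    by simp
  then show ?case using insert.IH insert.prems by blast
qed

lemma irr_cover: assumes "affine_variety X" "finite N" "\<forall>g\<in>N. zariski_closed (Z g) \<and> \<not> X \<subseteq> Z g"
  "zariski_closed Y" "X \<subseteq> Y \<union> (\<Union>g\<in>N. Z g)" shows "X \<subseteq> Y"
proof -
  have "X \<subseteq> Y \<or> X \<subseteq> (\<Union>g\<in>N. Z g)"
    using irr_two[OF assms(1) assms(4), of "\<Union>g\<in>N. Z g"] zc_Union[OF assms(2), of Z] assms(3,5) by simp
  moreover have "\<not> X \<subseteq> (\<Union>g\<in>N. Z g)"
    using irr_union[OF assms(1) assms(2), of Z] assms(3) by blast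
  ultimately show ?thesis by blast
qed

lemma sep_poly: assumes "(x::complex^'n) \<noteq> y" shows "\<exists>l\<in>polyfun. l x = 1 \<and> l y = 0"
proof -
  obtain i where i: "x $ i \<noteq> y $ i" using assms by (auto simp: vec_eq_iff)
  define l where "l = (\<lambda>z::complex^'n. (1 / (x $ i - y $ i)) * (z $ i - y $ i))"
  have "l \<in> polyfun" unfolding l_def by (intro polyfun_scale polyfun_diff pf_coord pf_const)
  moreover have "l x = 1" "l y = 0" unfolding l_def using i by auto
  ultimately show ?thesis by blast
qed

lemma clinear_cong: "(\<forall>f\<in>regfun X. D f = D' f) \<Longrightarrow> clinear_on X D = clinear_on X D'"
  unfolding clinear_on_def by (simp add: regfun_lin)

lemma cl_op_diff: "clinear_on X D \<Longrightarrow> clinear_on X E \<Longrightarrow> clinear_on X (op_diff D E)"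
proof -
  assume a: "clinear_on X D" "clinear_on X E"
  have "clinear_on X (\<lambda>f x. \<Sum>i\<in>{0::nat,1}. (if i = 0 then 1 else -1) * (if i = 0 then D else E) f x)"
    by (rule cl_lincomb) (use a in auto)
  moreover have "(\<lambda>f x. \<Sum>i\<in>{0::nat,1}. (if i = 0 then 1 else -1) * (if i = 0 then D else E) f x) = op_diff D E"
    by (auto simp: op_diff_def)
  ultimately show ?thesis by simp
qed

lemma dbelow_cong: "(\<forall>f\<in>regfun X. D f = D' f) \<Longrightarrow> diffop_below X d D = diffop_below X d D'"
  unfolding diffop_below_def using clinear_cong[of X D D'] diffop_cong[of X D D'] by auto

lemma dbelow_lincomb:
  assumes "finite I" "\<forall>i\<in>I. diffop_below X d (Dg i)"
  shows "diffop_below X d (\<lambda>f x. \<Sum>i\<in>I. c i * Dg i f x)"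
proof (cases "d = 0")
  case True
  then have h: "\<forall>i\<in>I. clinear_on X (Dg i) \<and> (\<forall>f\<in>regfun X. Dg i f = (\<lambda>x. 0))"
    using assms(2) unfolding diffop_below_def by simp
  have "clinear_on X (\<lambda>f x. \<Sum>i\<in>I. c i * Dg i f x)" by (rule cl_lincomb[OF assms(1)]) (use h in blast)
  moreover have "\<forall>f\<in>regfun X. (\<lambda>x. \<Sum>i\<in>I. c i * Dg i f x) = (\<lambda>x. 0)" using h by simp
  ultimately show ?thesis using True unfolding diffop_below_def by simp
next
  case False
  then have h: "\<forall>i\<in>I. diffop X (d - 1) (Dg i)"
    using assms(2) unfolding diffop_below_def by simp
  show ?thesis using False diffop_lincomb[OF assms(1) h] unfolding diffop_below_def by simp
qed

context gact
begin

lemma fa_scale_sum': "fa h (\<lambda>z. \<Sum>i\<in>I. c * u i z) = (\<lambda>z. \<Sum>i\<in>I. c * fa h (u i) z)"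
  by (auto simp: fun_act_def)

lemma fix_closed: assumes g: "g \<in> carrier G"
  shows "\<exists>Z. zariski_closed Z \<and> (\<forall>z\<in>X. z \<in> Z \<longleftrightarrow> act g z = z)"
proof -
  have "\<forall>i. \<exists>p. p \<in> polyfun \<and> (\<forall>x\<in>X. act g x $ i = p x)"
    using morph[OF g] unfolding morphism_def by blast
  from choice[OF this] obtain P where P: "\<And>i. P i \<in> polyfun" "\<And>i. \<forall>x\<in>X. act g x $ i = P i x" by blast
  define S where "S = range (\<lambda>i. \<lambda>z. P i z - z $ i)"
  have "S \<subseteq> polyfun" unfolding S_def using P(1) by (auto intro!: polyfun_diff pf_coord)
  then have zc: "zariski_closed {z. \<forall>p\<in>S. p z = 0}" unfolding zariski_closed_def by blast
  have "\<forall>z\<in>X. z \<in> {z. \<forall>p\<in>S. p z = 0} \<longleftrightarrow> act g z = z"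
    unfolding S_def using P(2) by (auto simp: vec_eq_iff)
  then show ?thesis using zc by blast
qed

lemma kill:
  assumes AV: "affine_variety X" and fin: "finite (carrier G)" and Pd: "diffop X d P"
    and inv0: "\<forall>f\<in>invariants G X act. P f = (\<lambda>x. 0)" and f: "f \<in> regfun X"
  shows "P f = (\<lambda>x. 0)"
proof -
  have clP: "clinear_on X P" using diffop_clinear[OF Pd] .
  have pt: "P f x = 0" if xX: "x \<in> X" and U: "\<forall>g\<in>carrier G. act g x = x \<longrightarrow> (\<forall>z\<in>X. act g z = z)"
    and f: "f \<in> regfun X" for x f
  proof -
    define B where "B = {g\<in>carrier G. act (inv\<^bsub>G\<^esub> g) x \<noteq> x}"
    have finB: "finite B" unfolding B_def using fin by simp
    have "\<forall>g\<in>B. \<exists>l. l \<in> polyfun \<and> l x = 1 \<and> l (act (inv\<^bsub>G\<^esub> g) x) = 0"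
    proof
      fix g assume "g \<in> B"
      then have "x \<noteq> act (inv\<^bsub>G\<^esub> g) x" unfolding B_def by auto
      from sep_poly[OF this] show "\<exists>l. l \<in> polyfun \<and> l x = 1 \<and> l (act (inv\<^bsub>G\<^esub> g) x) = 0" by blast
    qed
    from bchoice[OF this] obtain L where L: "\<forall>g\<in>B. L g \<in> polyfun \<and> L g x = 1 \<and> L g (act (inv\<^bsub>G\<^esub> g) x) = 0"
      by blast
    define w where "w = mask X (\<lambda>z. \<Prod>g\<in>B. L g z ^ Suc d)"
    have wr: "w \<in> regfun X" unfolding w_def
      by (rule mask_regfun, rule polyfun_prod[OF finB]) (use L in \<open>blast intro: polyfun_power\<close>)
    have wx: "w x = 1" unfolding w_def mask_def using xX L by simp
    have stepA: "P (\<lambda>z. w z * f z) x = 0" if f: "f \<in> regfun X" for f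
    proof -
      define u where "u = (\<lambda>z. w z * f z)"
      have ur: "u \<in> regfun X" unfolding u_def using regfun_mult[OF wr f] .
      define F where "F = (\<lambda>z. \<Sum>g\<in>carrier G. fa g u z)"
      have Fr: "F \<in> regfun X" unfolding F_def
        by (rule regfun_sum[OF fin]) (use fa_regfun ur in blast)
      have "\<forall>h\<in>carrier G. fa h F = F"
      proof
        fix h assume h: "h \<in> carrier G"
        have "fa h F = (\<lambda>z. \<Sum>g\<in>carrier G. fa h (fa g u) z)" unfolding F_def fa_sum ..
        also have "\<dots> = (\<lambda>z. \<Sum>g\<in>carrier G. fa (h \<otimes>\<^bsub>G\<^esub> g) u z)"
        proof
          fix z show "(\<Sum>g\<in>carrier G. fa h (fa g u) z) = (\<Sum>g\<in>carrier G. fa (h \<otimes>\<^bsub>G\<^esub> g) u z)"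
            by (rule sum.cong[OF refl]) (simp add: fa_comp[OF h])
        qed
        also have "\<dots> = F" unfolding F_def
        proof
          fix z show "(\<Sum>g\<in>carrier G. fa (h \<otimes>\<^bsub>G\<^esub> g) u z) = (\<Sum>g\<in>carrier G. fa g u z)"
            by (rule sum_reindex[OF h, of "\<lambda>g. fa g u z"])
        qed
        finally show "fa h F = F" .
      qed
      then have "F \<in> invariants G X act" unfolding invariants_def using Fr by blast
      then have "P F = (\<lambda>x. 0)" using inv0 by blast
      moreover have "P F = (\<lambda>z. \<Sum>g\<in>carrier G. P (fa g u) z)" unfolding F_def
        by (rule cl_sum[OF clP fin]) (use fa_regfun ur in blast)
      ultimately have s0: "(\<Sum>g\<in>carrier G. P (fa g u) x) = 0" by metis
      have terms: "P (fa g u) x = (if g \<in> B then 0 else P u x)" if g: "g \<in> carrier G" for g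
      proof (cases "g \<in> B")
        case False
        have ig: "inv\<^bsub>G\<^esub> g \<in> carrier G" using g grp by (simp add: group.inv_closed)
        have "act (inv\<^bsub>G\<^esub> g) x = x" using False g unfolding B_def by simp
        then have "\<forall>z\<in>X. act (inv\<^bsub>G\<^esub> g) z = z" using U ig by blast
        then have "fa g u = u" by (rule fa_triv[OF ur])
        then show ?thesis using False by simp
      next
        case True
        have ig: "inv\<^bsub>G\<^esub> g \<in> carrier G" using g grp by (simp add: group.inv_closed)
        define lm where "lm = mask X (L g)"
        define w' where "w' = mask X (\<lambda>z. \<Prod>h\<in>B - {g}. L h z ^ Suc d)"
        have lmr: "lm \<in> regfun X" unfolding lm_def using L True mask_regfun by blast
        have w'r: "w' \<in> regfun X" unfolding w'_def
          by (rule mask_regfun, rule polyfun_prod[OF finite_Diff[OF finB]]) (use L in \<open>blast intro: polyfun_power\<close>)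
        have eq: "fa g u = (\<lambda>z. fa g lm z ^ Suc d * fa g (\<lambda>z. w' z * f z) z)"
        proof
          fix z
          show "fa g u z = fa g lm z ^ Suc d * fa g (\<lambda>z. w' z * f z) z"
          proof (cases "z \<in> X")
            case True
            have yX: "act (inv\<^bsub>G\<^esub> g) z \<in> X" using act_in[OF ig True] .
            have "(\<Prod>h\<in>B. L h (act (inv\<^bsub>G\<^esub> g) z) ^ Suc d) =
               L g (act (inv\<^bsub>G\<^esub> g) z) ^ Suc d * (\<Prod>h\<in>B - {g}. L h (act (inv\<^bsub>G\<^esub> g) z) ^ Suc d)"
              using prod.remove[OF finB \<open>g \<in> B\<close>] by simp
            then show ?thesis using True yX unfolding fun_act_def u_def w_def lm_def w'_def mask_def
              by simp
          next
            case False
            then show ?thesis unfolding fun_act_def by simp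
          qed
        qed
        have ax: "fa g lm x = 0" unfolding fun_act_def lm_def mask_def
          using xX act_in[OF ig xX] L True by simp
        have "P (fa g u) x = 0" unfolding eq
          by (rule mpow_zero[OF Pd fa_regfun[OF g lmr] ax fa_regfun[OF g regfun_mult[OF w'r f]]])
        then show ?thesis using True by simp
      qed
      have "(\<Sum>g\<in>carrier G. P (fa g u) x) = (\<Sum>g\<in>carrier G. (if g \<in> B then 0 else P u x))"
        using terms by (rule sum.cong[OF refl])
      also have "\<dots> = of_nat (card (carrier G - B)) * P u x"
        by (simp add: sum.If_cases fin Diff_eq)
      finally have "of_nat (card (carrier G - B)) * P u x = 0" using s0 by simp
      moreover have "\<one>\<^bsub>G\<^esub> \<in> carrier G - B" unfolding B_def
        using xX act_one monoid.inv_one[OF group.is_monoid[OF grp]] monoid.one_closed[OF group.is_monoid[OF grp]] by simp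
      then have "card (carrier G - B) \<noteq> 0" using fin by auto
      ultimately show ?thesis unfolding u_def by simp
    qed
    define q where "q = (\<lambda>z. mask X (\<lambda>z. 1) z - w z)"
    have qr: "q \<in> regfun X" unfolding q_def by (rule regfun_diff[OF mask_regfun[OF pf_const] wr])
    have qx: "q x = 0" unfolding q_def mask_def using xX wx by simp
    have stepB: "\<forall>f\<in>regfun X. P f x = P (\<lambda>z. q z ^ k * f z) x" for k
    proof (induction k)
      case 0 then show ?case by simp
    next
      case (Suc k)
      show ?case
      proof
        fix f assume f: "f \<in> regfun X"
        define f' where "f' = (\<lambda>z. q z ^ k * f z)"
        have f'r: "f' \<in> regfun X" unfolding f'_def by (rule regfun_power_mult[OF qr f])
        have split: "f' = (\<lambda>z. w z * f' z + q z * f' z)"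
        proof
          fix z show "f' z = w z * f' z + q z * f' z"
            using regfun_out[OF f'r, of z] unfolding q_def mask_def by (cases "z \<in> X") (auto simp: algebra_simps)
        qed
        have "P f' = (\<lambda>z. P (\<lambda>z. w z * f' z) z + P (\<lambda>z. q z * f' z) z)"
          by (subst split, rule cl_add[OF clP regfun_mult[OF wr f'r] regfun_mult[OF qr f'r]])
        then have "P f' x = P (\<lambda>z. q z * f' z) x" using stepA[OF f'r] by simp
        moreover have "(\<lambda>z. q z * f' z) = (\<lambda>z. q z ^ Suc k * f z)" unfolding f'_def by (simp add: mult.assoc)
        moreover have "P f x = P f' x" using Suc.IH f unfolding f'_def by blast
        ultimately show "P f x = P (\<lambda>z. q z ^ Suc k * f z) x" by simp
      qed
    qed
    show "P f x = 0" using stepB[of "Suc d"] f mpow_zero[OF Pd qr qx f] by simp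
  qed
  obtain p where p: "p \<in> polyfun" "P f = mask X p" using cl_regfun[OF clP f] by (auto simp: regfun_iff)
  define N where "N = {g\<in>carrier G. \<not> (\<forall>z\<in>X. act g z = z)}"
  have finN: "finite N" unfolding N_def using fin by simp
  have "\<forall>g\<in>N. \<exists>Z. zariski_closed Z \<and> (\<forall>z\<in>X. z \<in> Z \<longleftrightarrow> act g z = z)"
    unfolding N_def using fix_closed by blast
  from bchoice[OF this] obtain Z where Z: "\<forall>g\<in>N. zariski_closed (Z g) \<and> (\<forall>z\<in>X. z \<in> Z g \<longleftrightarrow> act g z = z)" by blast
  have Z2: "\<forall>g\<in>N. zariski_closed (Z g) \<and> \<not> X \<subseteq> Z g"
    using Z unfolding N_def by blast
  have cover: "X \<subseteq> {z. p z = 0} \<union> (\<Union>g\<in>N. Z g)"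
  proof
    fix x assume xX: "x \<in> X"
    show "x \<in> {z. p z = 0} \<union> (\<Union>g\<in>N. Z g)"
    proof (cases "\<exists>g\<in>N. x \<in> Z g")
      case True then show ?thesis by blast
    next
      case False
      have "\<forall>g\<in>carrier G. act g x = x \<longrightarrow> (\<forall>z\<in>X. act g z = z)"
        using False Z xX unfolding N_def by blast
      then have "P f x = 0" using pt[OF xX _ f] by blast
      moreover have "P f x = p x" using p(2) xX unfolding mask_def by simp
      ultimately have "p x = 0" by simp
      then show ?thesis by blast
    qed
  qed
  have "X \<subseteq> {z. p z = 0}" by (rule irr_cover[OF AV finN Z2 zc_zero[OF p(1)] cover])
  then have "\<forall>z. mask X p z = 0" unfolding mask_def by auto
  then show "P f = (\<lambda>x. 0)" unfolding p(2) by (simp add: fun_eq_iff)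
qed

end



context gact
begin

lemma pres_inv:
  assumes AV: "affine_variety X" and fin: "finite (carrier G)" and Dd: "diffop X d D"
    and pr: "preserves_invariants G X act D"
  shows "invariant_op G X act D"
  unfolding invariant_op_def
proof (intro ballI)
  fix g f assume g: "g \<in> carrier G" and f: "f \<in> regfun X"
  have ig: "inv\<^bsub>G\<^esub> g \<in> carrier G" using g grp by (simp add: group.inv_closed)
  define P where "P = op_diff (oa g D) D"
  have Pd: "diffop X d P" unfolding P_def by (rule diffop_op_diff[OF diffop_conj[OF g Dd] Dd])
  have "\<forall>h\<in>invariants G X act. P h = (\<lambda>x. 0)"
  proof
    fix h assume h: "h \<in> invariants G X act"
    have Dh: "D h \<in> invariants G X act" using pr h unfolding preserves_invariants_def by blast
    have "oa g D h = D h" unfolding op_act_def using inv_fix[OF h ig] inv_fix[OF Dh g] by simp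
    then show "P h = (\<lambda>x. 0)" unfolding P_def op_diff_def by simp
  qed
  then have e0: "P f = (\<lambda>x. 0)" using kill[OF AV fin Pd _ f] by blast
  have e: "(\<lambda>x. oa g D f x - D f x) = (\<lambda>x. 0)" using e0 unfolding P_def op_diff_def .
  show "oa g D f = D f"
  proof
    fix x show "oa g D f x = D f x" using fun_cong[OF e, of x] by simp
  qed
qed

lemma dbelow_conj: assumes g: "g \<in> carrier G" and R: "diffop_below X d R"
  shows "diffop_below X d (op_diff (oa g R) R)"
proof (cases "d = 0")
  case True
  have ig: "inv\<^bsub>G\<^esub> g \<in> carrier G" using g grp by (simp add: group.inv_closed)
  have cl: "clinear_on X R" and z: "\<forall>f\<in>regfun X. R f = (\<lambda>x. 0)"
    using R True unfolding diffop_below_def by simp_all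
  have "clinear_on X (op_diff (oa g R) R)" by (rule cl_op_diff[OF oa_clinear[OF cl g] cl])
  moreover have "\<forall>f\<in>regfun X. op_diff (oa g R) R f = (\<lambda>x. 0)"
  proof
    fix f assume f: "f \<in> regfun X"
    have "R (fa (inv\<^bsub>G\<^esub> g) f) = (\<lambda>x. 0)" using z fa_regfun[OF ig f] by blast
    then have "oa g R f = (\<lambda>x. 0)" unfolding op_act_def by (simp add: fa_zero)
    then show "op_diff (oa g R) R f = (\<lambda>x. 0)" unfolding op_diff_def using z f by simp
  qed
  ultimately show ?thesis using True unfolding diffop_below_def by simp
next
  case False
  then have r: "diffop X (d - 1) R" using R unfolding diffop_below_def by simp
  have "diffop X (d - 1) (op_diff (oa g R) R)" by (rule diffop_op_diff[OF diffop_conj[OF g r] r])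
  then show ?thesis using False unfolding diffop_below_def by simp
qed

end

theorem theorem3p1:
  fixes G :: "('g, 'b) monoid_scheme"
    and X :: "(complex^'n) set"
    and act :: "'g \<Rightarrow> complex^'n \<Rightarrow> complex^'n"
  assumes "affine_variety X"
    and "group_action_on_variety G X act"
    and "finite (carrier G)"
  shows "(\<forall>D\<in>diffops X. preserves_invariants G X act D \<longleftrightarrow> invariant_op G X act D)
    \<and> (\<forall>d. \<forall>D. diffop X d D \<longrightarrow>
         ((\<exists>E. diffop X d E \<and> preserves_invariants G X act E \<and> diffop_below X d (op_diff D E))
          \<longleftrightarrow> (\<forall>g\<in>carrier G. diffop_below X d (op_diff (op_act G X act g D) D))))"
proof -
  interpret gact G X act by (rule gact.intro[OF assms(2)])
  have fin: "finite (carrier G)" by (rule assms(3))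
  have one: "\<one>\<^bsub>G\<^esub> \<in> carrier G" using monoid.one_closed[OF group.is_monoid[OF grp]] .
  have cardnz: "card (carrier G) \<noteq> 0" using one fin by auto
  have P1: "\<forall>D\<in>diffops X. preserves_invariants G X act D \<longleftrightarrow> invariant_op G X act D"
  proof
    fix D assume "D \<in> diffops X"
    then obtain d where d: "diffop X d D" unfolding diffops_def by blast
    show "preserves_invariants G X act D \<longleftrightarrow> invariant_op G X act D"
      using pres_inv[OF assms(1) fin d] invop_preserves[OF diffop_clinear[OF d]] by blast
  qed
  have P2: "\<forall>d. \<forall>D. diffop X d D \<longrightarrow>
         ((\<exists>E. diffop X d E \<and> preserves_invariants G X act E \<and> diffop_below X d (op_diff D E))
          \<longleftrightarrow> (\<forall>g\<in>carrier G. diffop_below X d (op_diff (op_act G X act g D) D)))"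
  proof (intro allI impI iffI)
    fix d D assume Dd: "diffop X d D"
      and "\<exists>E. diffop X d E \<and> preserves_invariants G X act E \<and> diffop_below X d (op_diff D E)"
    then obtain E where Ed: "diffop X d E" and Ep: "preserves_invariants G X act E"
      and Eb: "diffop_below X d (op_diff D E)" by blast
    have Einv: "invariant_op G X act E" by (rule pres_inv[OF assms(1) fin Ed Ep])
    show "\<forall>g\<in>carrier G. diffop_below X d (op_diff (oa g D) D)"
    proof
      fix g assume g: "g \<in> carrier G"
      have ig: "inv\<^bsub>G\<^esub> g \<in> carrier G" using g grp by (simp add: group.inv_closed)
      define R where "R = op_diff D E"
      have b: "diffop_below X d (op_diff (oa g R) R)" unfolding R_def by (rule dbelow_conj[OF g Eb])
      have agree: "\<forall>f\<in>regfun X. op_diff (oa g R) R f = op_diff (oa g D) D f"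
      proof
        fix f assume f: "f \<in> regfun X"
        have "oa g R f = (\<lambda>x. oa g D f x - oa g E f x)"
          unfolding R_def op_act_def op_diff_def fa_diff ..
        moreover have "oa g E f = E f" using Einv g f unfolding invariant_op_def by blast
        ultimately show "op_diff (oa g R) R f = op_diff (oa g D) D f"
          unfolding op_diff_def R_def by simp
      qed
      show "diffop_below X d (op_diff (oa g D) D)" using b dbelow_cong[OF agree] by simp
    qed
  next
    fix d D assume Dd: "diffop X d D"
      and H: "\<forall>g\<in>carrier G. diffop_below X d (op_diff (oa g D) D)"
    define c where "c = 1 / (of_nat (card (carrier G)) :: complex)"
    define E where "E = (\<lambda>f x. \<Sum>g\<in>carrier G. c * oa g D f x)"
    have Ed: "diffop X d E" unfolding E_def
      by (rule diffop_lincomb[OF fin]) (use diffop_conj Dd in blast)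
    have Einv: "invariant_op G X act E" unfolding invariant_op_def
    proof (intro ballI)
      fix h f assume h: "h \<in> carrier G" and f: "f \<in> regfun X"
      have "oa h E f = fa h (\<lambda>x. \<Sum>g\<in>carrier G. c * oa g D (fa (inv\<^bsub>G\<^esub> h) f) x)"
        unfolding op_act_def E_def ..
      also have "\<dots> = (\<lambda>x. \<Sum>g\<in>carrier G. c * fa h (oa g D (fa (inv\<^bsub>G\<^esub> h) f)) x)"
        by (rule fa_scale_sum')
      also have "\<dots> = (\<lambda>x. \<Sum>g\<in>carrier G. c * oa (h \<otimes>\<^bsub>G\<^esub> g) D f x)"
      proof
        fix x
        show "(\<Sum>g\<in>carrier G. c * fa h (oa g D (fa (inv\<^bsub>G\<^esub> h) f)) x) = (\<Sum>g\<in>carrier G. c * oa (h \<otimes>\<^bsub>G\<^esub> g) D f x)"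
        proof (rule sum.cong[OF refl])
          fix g assume g: "g \<in> carrier G"
          have "fa h (oa g D (fa (inv\<^bsub>G\<^esub> h) f)) = oa h (oa g D) f" unfolding op_act_def[of _ _ _ h] ..
          also have "\<dots> = oa (h \<otimes>\<^bsub>G\<^esub> g) D f" by (rule oa_comp[OF g h])
          finally show "c * fa h (oa g D (fa (inv\<^bsub>G\<^esub> h) f)) x = c * oa (h \<otimes>\<^bsub>G\<^esub> g) D f x" by simp
        qed
      qed
      also have "\<dots> = E f" unfolding E_def
      proof
        fix x show "(\<Sum>g\<in>carrier G. c * oa (h \<otimes>\<^bsub>G\<^esub> g) D f x) = (\<Sum>g\<in>carrier G. c * oa g D f x)"
          by (rule sum_reindex[OF h, of "\<lambda>g. c * oa g D f x"])
      qed
      finally show "oa h E f = E f" .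
    qed
    have Ep: "preserves_invariants G X act E" by (rule invop_preserves[OF diffop_clinear[OF Ed] Einv])
    have lc: "diffop_below X d (\<lambda>f x. \<Sum>g\<in>carrier G. (- c) * op_diff (oa g D) D f x)"
      by (rule dbelow_lincomb[OF fin]) (use H in blast)
    have agree: "\<forall>f\<in>regfun X. (\<lambda>x. \<Sum>g\<in>carrier G. (- c) * op_diff (oa g D) D f x) = op_diff D E f"
    proof
      fix f assume f: "f \<in> regfun X"
      show "(\<lambda>x. \<Sum>g\<in>carrier G. (- c) * op_diff (oa g D) D f x) = op_diff D E f"
      proof
        fix x
        have "(\<Sum>g\<in>carrier G. (- c) * op_diff (oa g D) D f x)
            = (\<Sum>g\<in>carrier G. c * D f x - c * oa g D f x)"
          by (rule sum.cong[OF refl]) (simp add: op_diff_def algebra_simps)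
        also have "\<dots> = (\<Sum>g\<in>carrier G. c * D f x) - (\<Sum>g\<in>carrier G. c * oa g D f x)"
          by (rule sum_subtractf)
        also have "(\<Sum>g\<in>carrier G. c * D f x) = of_nat (card (carrier G)) * (c * D f x)"
          by simp
        also have "\<dots> = D f x" unfolding c_def using cardnz by simp
        finally show "(\<Sum>g\<in>carrier G. (- c) * op_diff (oa g D) D f x) = op_diff D E f x"
          unfolding op_diff_def E_def by simp
      qed
    qed
    have Eb: "diffop_below X d (op_diff D E)" using lc dbelow_cong[OF agree] by simp
    show "\<exists>E. diffop X d E \<and> preserves_invariants G X act E \<and> diffop_below X d (op_diff D E)"
      using Ed Ep Eb by blast
  qed
  show ?thesis using P1 P2 by blast
qed


end
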